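(* Let $X$ be a real linear metric space and let $f:X\to\mathbb{R}$ be a sublinear function. Then $f$ is bounded above on some shift-compact set in $X$ if and only if $f$ is continuous.
   Context: A real linear metric space is a real topological vector space whose topology is given by an invariant metric. A function $f:X\to\mathbb{R}$ is sublinear if $f(x+y)\le f(x)+f(y)$ for all $x,y\in X$ and $f(nx)=nf(x)$ for all $x\in X$, $n\in\mathbb{N}$. A set $A\subset X$ is shift-compact if for every sequence $(x_n)$ tending to $0$ in $X$ there exists $x\in X$ such that $\{n\in\mathbb{N}: x+x_n\in A\}$ is infinite. *)

theory Defs
  imports "HOL-Analysis.Analysis"
begin

text \<open>A real linear metric space: a real vector space with a metric that is
translation invariant and whose topology makes the vector operations continuous
(addition is automatically continuous for an invariant metric; we require it anyway).\<close>
definition linear_metric_space :: "'a::{real_vector,metric_space} itself \<Rightarrow> bool" where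
  "linear_metric_space _ \<longleftrightarrow>
     (\<forall>x y z::'a. dist (x + z) (y + z) = dist x y) \<and>
     continuous_on UNIV (\<lambda>p::'a \<times> 'a. fst p + snd p) \<and>
     continuous_on UNIV (\<lambda>p::real \<times> 'a. fst p *\<^sub>R snd p)"

definition sublinear :: "('a::real_vector \<Rightarrow> real) \<Rightarrow> bool" where
  "sublinear f \<longleftrightarrow>
     (\<forall>x y. f (x + y) \<le> f x + f y) \<and> (\<forall>x. \<forall>n::nat. f (real n *\<^sub>R x) = real n * f x)"

definition shift_compact :: "'a::{real_vector,metric_space} set \<Rightarrow> bool" where
  "shift_compact A \<longleftrightarrow>
     (\<forall>s::nat \<Rightarrow> 'a. s \<longlonglongrightarrow> 0 \<longrightarrow> (\<exists>x. infinite {n. x + s n \<in> A}))"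

end

theory Submission
  imports Defs
begin

lemma ev_infinite:
  assumes "eventually P sequentially"
  shows "infinite {n. P n}"
proof -
  obtain N where N: "\<And>n. n \<ge> N \<Longrightarrow> P n" using assms by (auto simp: eventually_sequentially)
  have "{N..} \<subseteq> {n. P n}" using N by auto
  moreover have "infinite {N::nat..}" by (simp add: infinite_Ici)
  ultimately show ?thesis using infinite_super by blast
qed

lemma scale_cont:
  fixes c :: real
  assumes "linear_metric_space TYPE('a::{real_vector,metric_space})"
  shows "continuous_on UNIV (\<lambda>x::'a. c *\<^sub>R x)"
proof -
  have m: "continuous_on UNIV (\<lambda>p::real \<times> 'a. fst p *\<^sub>R snd p)"
    using assms unfolding linear_metric_space_def by blast
  have p: "continuous_on UNIV (\<lambda>x::'a. (c, x))"
    by (intro continuous_intros)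
  have "continuous_on UNIV ((\<lambda>p::real \<times> 'a. fst p *\<^sub>R snd p) \<circ> (\<lambda>x::'a. (c, x)))"
    by (rule continuous_on_compose[OF p]) (rule continuous_on_subset[OF m], simp)
  thus ?thesis by (simp add: o_def)
qed

theorem corollary1p10:
  fixes f :: "'a::{real_vector,metric_space} \<Rightarrow> real"
  assumes "linear_metric_space TYPE('a)"
    and "sublinear f"
  shows "(\<exists>A. shift_compact A \<and> bdd_above (f ` A)) \<longleftrightarrow> continuous_on UNIV f"
proof -
  have inv: "\<And>x y z::'a. dist (x + z) (y + z) = dist x y"
    using assms(1) unfolding linear_metric_space_def by blast
  have sub: "\<And>x y. f (x + y) \<le> f x + f y" and hom: "\<And>x (n::nat). f (real n *\<^sub>R x) = real n * f x"
    using assms(2) unfolding sublinear_def by blast+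
  have f0: "f 0 = 0" using hom[of 0 0] by simp
  show ?thesis
  proof
    assume "\<exists>A. shift_compact A \<and> bdd_above (f ` A)"
    then obtain A M where sc: "shift_compact A" and M: "\<And>a. a \<in> A \<Longrightarrow> f a \<le> M"
      by (auto simp: bdd_above_def)
    have bnd: "\<exists>\<delta>>0. \<exists>K. \<forall>h. dist h 0 < \<delta> \<longrightarrow> f h \<le> K"
    proof (rule ccontr)
      assume "\<not> ?thesis"
      hence H: "\<And>\<delta> K. \<delta> > 0 \<Longrightarrow> \<exists>h. dist h 0 < \<delta> \<and> f h > K"
        by (meson not_le)
      define h where "h n = (SOME h. dist h 0 < 1 / (real n + 1) \<and> f h > real n)" for n
      have hp: "dist (h n) 0 < 1 / (real n + 1) \<and> f (h n) > real n" for n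
        unfolding h_def by (rule someI_ex) (rule H, simp)
      have "h \<longlonglongrightarrow> 0"
      proof (rule metric_LIMSEQ_I)
        fix r :: real assume "r > 0"
        then obtain N where N: "1 / (real N + 1) < r"
          by (metis add.commute nat_approx_posE of_nat_Suc)
        show "\<exists>no. \<forall>n\<ge>no. dist (h n) 0 < r"
        proof (intro exI allI impI)
          fix n assume "N \<le> n"
          hence "1 / (real n + 1) \<le> 1 / (real N + 1)"
            by (simp add: frac_le)
          thus "dist (h n) 0 < r" using hp[of n] N by simp
        qed
      qed
      then obtain x where x: "infinite {n. x + h n \<in> A}"
        using sc unfolding shift_compact_def by blast
      then obtain n where n: "n > nat \<lceil>M + f (- x)\<rceil>" "x + h n \<in> A"
        unfolding infinite_nat_iff_unbounded by blast
      have "f (h n) = f ((x + h n) + (- x))" by simp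
      also have "\<dots> \<le> f (x + h n) + f (- x)" by (rule sub)
      also have "\<dots> \<le> M + f (- x)" using M[OF n(2)] by simp
      finally have "f (h n) \<le> M + f (- x)" .
      moreover have "real n > M + f (- x)" using n(1) by linarith
      ultimately show False using hp[of n] by linarith
    qed
    then obtain \<delta> K where d: "\<delta> > 0" and K: "\<And>h. dist h 0 < \<delta> \<Longrightarrow> f h \<le> K" by blast
    have small: "\<exists>d>0. \<forall>h. dist h 0 < d \<longrightarrow> f h < e" if e: "e > 0" for e
    proof -
      define m where "m = nat \<lceil>K / e\<rceil> + 1"
      have c1: "K / e \<le> real (nat \<lceil>K / e\<rceil>)" by (rule real_nat_ceiling_ge)
      have mpos: "real m > 0" unfolding m_def by simp
      have mK: "real m > K / e" unfolding m_def using c1 by simp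
      have Km: "K < real m * e" using mK e by (simp add: pos_divide_less_eq)
      have sc2: "continuous_on UNIV (\<lambda>x::'a. real m *\<^sub>R x)" by (rule scale_cont[OF assms(1)])
      have cc: "\<forall>x::'a\<in>UNIV. \<forall>e>0. \<exists>d>0. \<forall>x'\<in>UNIV. dist x' x < d \<longrightarrow> dist (real m *\<^sub>R x') (real m *\<^sub>R x) < e"
        by (rule continuous_on_iff[THEN iffD1, OF sc2])
      have "\<exists>d'>0. \<forall>h::'a\<in>UNIV. dist h 0 < d' \<longrightarrow> dist (real m *\<^sub>R h) (real m *\<^sub>R 0) < \<delta>"
        using cc[rule_format, OF UNIV_I d] .
      then obtain d' where d': "d' > 0" "\<And>h::'a. dist h 0 < d' \<Longrightarrow> dist (real m *\<^sub>R h) (real m *\<^sub>R 0) < \<delta>"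
        by auto
      show ?thesis
      proof (intro exI conjI allI impI)
        show "d' > 0" by (rule d')
        fix h :: 'a assume "dist h 0 < d'"
        hence "dist (real m *\<^sub>R h) (real m *\<^sub>R 0) < \<delta>" by (rule d'(2))
        hence "dist (real m *\<^sub>R h) 0 < \<delta>" by (simp only: scaleR_zero_right)
        hence "f (real m *\<^sub>R h) \<le> K" by (rule K)
        hence "real m * f h \<le> K" by (simp only: hom)
        hence "real m * f h < real m * e" using Km by linarith
        thus "f h < e" using mpos by simp
      qed
    qed
    have cont: "isCont f x" for x
      unfolding continuous_at_eps_delta
    proof (intro allI impI)
      fix e :: real assume "e > 0"
      then obtain d where d: "d > 0" "\<And>h. dist h 0 < d \<Longrightarrow> f h < e" using small by blast
      show "\<exists>d>0. \<forall>y. dist y x < d \<longrightarrow> dist (f y) (f x) < e"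
      proof (intro exI conjI allI impI)
        show "d > 0" by (rule d)
        fix y assume y: "dist y x < d"
        define h where "h = y - x"
        have e1: "dist (h + x) (0 + x) = dist h 0" by (rule inv)
        have "h + x = y" by (simp add: h_def)
        hence "dist h 0 = dist y x" using e1 by simp
        hence dh: "dist h 0 < d" using y by simp
        have e2: "dist (- h + h) (0 + h) = dist (- h) 0" by (rule inv)
        hence "dist (- h) 0 = dist 0 h" by simp
        hence dmh: "dist (- h) 0 < d" using dh by (simp add: dist_commute)
        have "f y = f (x + h)" by (simp add: h_def)
        also have "\<dots> \<le> f x + f h" by (rule sub)
        finally have 1: "f y \<le> f x + f h" .
        have "f x = f (y + (- h))" by (simp add: h_def)
        also have "\<dots> \<le> f y + f (- h)" by (rule sub)
        finally have 2: "f x \<le> f y + f (- h)" .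
        show "dist (f y) (f x) < e" using 1 2 d(2)[OF dh] d(2)[OF dmh]
          by (simp add: dist_real_def abs_less_iff)
      qed
    qed
    show "continuous_on UNIV f" by (simp add: continuous_at_imp_continuous_on cont)
  next
    assume c: "continuous_on UNIV f"
    show "\<exists>A. shift_compact A \<and> bdd_above (f ` A)"
    proof (intro exI conjI)
      show "bdd_above (f ` {x. f x \<le> 1})" by (auto simp: bdd_above_def)
      show "shift_compact {x. f x \<le> 1}"
        unfolding shift_compact_def
      proof (intro allI impI exI)
        fix s :: "nat \<Rightarrow> 'a" assume "s \<longlonglongrightarrow> 0"
        hence "(\<lambda>n. f (s n)) \<longlonglongrightarrow> f 0"
          using c by (metis UNIV_I continuous_on_eq_continuous_at isCont_tendsto_compose open_UNIV)
        hence "eventually (\<lambda>n. f (s n) < 1) sequentially"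
          using f0 by (auto intro: order_tendstoD)
        hence "infinite {n. f (s n) < 1}" by (rule ev_infinite)
        thus "infinite {n. 0 + s n \<in> {x. f x \<le> 1}}"
          by (rule infinite_super[rotated]) auto
      qed
    qed
  qed
qed

end
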